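(* Let $m\ge1$ be an integer, $q$ a prime power, and consider ${\rm PG}(4m-3,q^2)$ equipped with the non-degenerate Hermitian polar space $\mathcal H(4m-3,q^2)$ obtained by field reduction as follows: take a non-degenerate Hermitian form $h$ on $V(2,q^{4m-2})$ (with respect to $x\mapsto x^{q^{2m-1}}$), regard $V(2,q^{4m-2})$ as a $(4m-2)$-dimensional vector space $\bar V$ over ${\rm GF}(q^2)$, and let $\mathcal H(4m-3,q^2)$ be defined by the form $\bar h={\rm Tr}_{q^{4m-2}|q^2}\circ h$, with associated unitary polarity $\rho$. Then there exists a $(2m-2)$-spread $\mathbf S$ of ${\rm PG}(4m-3,q^2)$ such that $q^{2m-1}+1$ members of $\mathbf S$ are generators of $\mathcal H(4m-3,q^2)$ and the remaining $q^{4m-2}-q^{2m-1}$ members occur in $(q^{4m-2}-q^{2m-1})/2$ pairs of the form $\{\Delta,\Delta^{\rho}\}$ with $\Delta\cap\Delta^{\rho}=\emptyset$.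
   Context: ${\rm Tr}_{q^{4m-2}|q^2}(x)=\sum_{i=0}^{2m-2}x^{q^{2i}}$. A $(2m-2)$-spread of ${\rm PG}(4m-3,q^2)$ is a set of pairwise disjoint $(2m-2)$-dimensional projective subspaces partitioning the point set. Generators of $\mathcal H(4m-3,q^2)$ are its totally isotropic subspaces of projective dimension $2m-2$. *)

theory Defs
  imports Main "HOL.Vector_Spaces" "HOL-Library.Product_Plus" "HOL-Computational_Algebra.Primes"
begin

text \<open>V(2,q^(4m-2)) is rendered as 'b * 'b for a finite field 'b of order q^(4m-2).
  GF(q^2) is a finite field 'a of order q^2, embedded into 'b by a field homomorphism emb.
  The GF(q^2)-vector space structure on 'b * 'b (the space written bar V in the paper)
  is given by the scalar multiplication sc.\<close>

definition bscale :: "'b::field \<Rightarrow> 'b \<times> 'b \<Rightarrow> 'b \<times> 'b" where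
  "bscale c v = (c * fst v, c * snd v)"

definition sc :: "('a::field \<Rightarrow> 'b::field) \<Rightarrow> 'a \<Rightarrow> 'b \<times> 'b \<Rightarrow> 'b \<times> 'b" where
  "sc emb a v = bscale (emb a) v"

definition field_embedding :: "('a::field \<Rightarrow> 'b::field) \<Rightarrow> bool" where
  "field_embedding emb \<longleftrightarrow> emb 1 = 1 \<and> (\<forall>x y. emb (x + y) = emb x + emb y)
      \<and> (\<forall>x y. emb (x * y) = emb x * emb y)"

definition hermitian_form :: "('b::field \<Rightarrow> 'b) \<Rightarrow> ('b \<times> 'b \<Rightarrow> 'b \<times> 'b \<Rightarrow> 'b) \<Rightarrow> bool" where
  "hermitian_form \<sigma> h \<longleftrightarrow>
     (\<forall>u v w. h (u + v) w = h u w + h v w) \<and>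
     (\<forall>c u v. h (bscale c u) v = c * h u v) \<and>
     (\<forall>u v. h v u = \<sigma> (h u v))"

definition nondegenerate :: "('v::zero \<Rightarrow> 'v \<Rightarrow> 'b::zero) \<Rightarrow> bool" where
  "nondegenerate h \<longleftrightarrow> (\<forall>u. (\<forall>v. h u v = 0) \<longrightarrow> u = 0)"

definition rel_trace :: "nat \<Rightarrow> nat \<Rightarrow> 'b::field \<Rightarrow> 'b" where
  "rel_trace q m x = (\<Sum>i\<in>{0..2*m-2}. x ^ (q ^ (2*i)))"

definition polar :: "('v \<Rightarrow> 'v \<Rightarrow> 'b::zero) \<Rightarrow> 'v set \<Rightarrow> 'v set" where
  "polar hb D = {v. \<forall>u\<in>D. hb u v = 0}"

definition proj_subspace :: "('a::field \<Rightarrow> 'v::ab_group_add \<Rightarrow> 'v) \<Rightarrow> nat \<Rightarrow> 'v set \<Rightarrow> bool" where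
  "proj_subspace s d W \<longleftrightarrow> module.subspace s W \<and> vector_space.dim s W = d + 1"

definition is_spread :: "('a::field \<Rightarrow> 'v::ab_group_add \<Rightarrow> 'v) \<Rightarrow> nat \<Rightarrow> 'v set set \<Rightarrow> bool" where
  "is_spread s d S \<longleftrightarrow> (\<forall>W\<in>S. proj_subspace s d W)
     \<and> (\<forall>W\<in>S. \<forall>W'\<in>S. W \<noteq> W' \<longrightarrow> W \<inter> W' = {0})
     \<and> \<Union>S = UNIV"

definition is_generator :: "('a::field \<Rightarrow> 'v::ab_group_add \<Rightarrow> 'v) \<Rightarrow> ('v \<Rightarrow> 'v \<Rightarrow> 'b::zero) \<Rightarrow> nat \<Rightarrow> 'v set \<Rightarrow> bool" where
  "is_generator s hb d W \<longleftrightarrow> proj_subspace s d W \<and> (\<forall>u\<in>W. \<forall>v\<in>W. hb u v = 0)"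

end

theory Submission
  imports Defs "HOL-Computational_Algebra.Polynomial"
begin


lemma ff_pow_card:
  fixes x :: "'b::{field,finite}"
  shows "x ^ card (UNIV :: 'b set) = x"
proof (cases "x = 0")
  case False
  have "x * (\<Prod>y\<in>UNIV-{0}. x * y) = x * x ^ (card (UNIV :: 'b set) - 1) * \<Prod>(UNIV-{0})"
    by (simp add: prod.distrib mult_ac)
  also have "x * x ^ (card (UNIV :: 'b set) - 1) = x ^ Suc (card (UNIV :: 'b set) - 1)"
    by (subst power_Suc) auto
  also have "Suc (card (UNIV :: 'b set) - 1) = card (UNIV :: 'b set)"
    using finite_UNIV_card_ge_0[where ?'a = 'b] by simp
  also have "(\<Prod>y\<in>UNIV-{0}. x * y) = (\<Prod>y\<in>UNIV-{0}. y)"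
    by (rule prod.reindex_bij_witness[of _ "\<lambda>y. y / x" "\<lambda>y. x * y"]) (use False in auto)
  finally show ?thesis
    by simp
qed (use finite_UNIV_card_ge_0[where ?'a = 'b] in auto)

lemma char_finite_field:
  assumes "prime p" "card (UNIV :: 'b::{field,finite} set) = p ^ n"
  shows "CHAR('b) = p"
proof -
  have "CHAR('b) > 0" by (simp add: finite_imp_CHAR_pos)
  hence pc: "prime CHAR('b)" using prime_CHAR_semidom by blast
  have "(\<Sum>y\<in>(UNIV::'b set). y + 1) = (\<Sum>y\<in>UNIV. y)"
    by (rule sum.reindex_bij_witness[of _ "\<lambda>y. y - 1" "\<lambda>y. y + 1"]) auto
  hence "of_nat (card (UNIV::'b set)) = (0::'b)" by (simp add: sum.distrib)
  hence "CHAR('b) dvd p ^ n" using of_nat_eq_0_iff_char_dvd assms(2) by metis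
  hence "CHAR('b) dvd p" using pc prime_dvd_power by blast
  thus ?thesis using pc assms(1) primes_dvd_imp_eq by blast
qed

lemma frob_add:
  assumes "prime p" "card (UNIV :: 'b::{field,finite} set) = p ^ n"
  shows "((x::'b) + y) ^ (p ^ j) = x ^ (p ^ j) + y ^ (p ^ j)"
  using freshmans_dream'[of "p^j" j x y] char_finite_field[OF assms] assms(1) by simp

lemma root_bound:
  fixes P :: "'b::field poly"
  assumes "P \<noteq> 0" "degree P \<le> n"
  shows "card {x. poly P x = 0} \<le> n"
  using card_poly_roots_bound[OF assms(1)] assms(2) by linarith

lemma card_pow_eq:
  assumes "n \<ge> 1"
  shows "card {x::'b::field. x ^ n = c} \<le> n"
proof -
  define P where "P = monom (1::'b) n - [:c:]"
  have "coeff P n = 1" using assms by (cases n) (simp_all add: P_def)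
  hence "P \<noteq> 0" by auto
  moreover have "degree P \<le> n" unfolding P_def
    by (rule degree_diff_le) (simp_all add: degree_monom_le)
  ultimately have "card {x. poly P x = 0} \<le> n" by (rule root_bound)
  moreover have "{x. poly P x = 0} = {x. x ^ n = c}" by (simp add: P_def poly_monom)
  ultimately show ?thesis by simp
qed

lemma card_pow_add:
  assumes "n \<ge> 2"
  shows "card {x::'b::field. x ^ n + e * x = c} \<le> n"
proof -
  define P where "P = monom (1::'b) n + [:-c, e:]"
  have "coeff P n = 1" using assms by (simp add: P_def coeff_pCons split: nat.split)
  hence "P \<noteq> 0" by auto
  moreover have "degree P \<le> n" unfolding P_def
    by (rule degree_add_le) (use assms in \<open>auto simp: degree_monom_le\<close>)
  ultimately have "card {x. poly P x = 0} \<le> n" by (rule root_bound)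
  moreover have "{x. poly P x = 0} = {x. x ^ n + e * x = c}" by (auto simp add: P_def poly_monom algebra_simps)
  ultimately show ?thesis by simp
qed

lemma fiber_count:
  assumes "finite G" "f ` G \<subseteq> B" "finite B" "card B \<le> nB"
    "\<And>b. b \<in> B \<Longrightarrow> card {x\<in>G. f x = b} \<le> M" "card G = nB * M" "b0 \<in> B"
  shows "card {x\<in>G. f x = b0} = M"
proof -
  let ?c = "\<lambda>b. card {x\<in>G. f x = b}"
  have G: "G = (\<Union>b\<in>B. {x\<in>G. f x = b})" using assms(2) by auto
  have "card G = (\<Sum>b\<in>B. ?c b)"
    by (subst G, rule card_UN_disjoint) (use assms in auto)
  also have "\<dots> = ?c b0 + (\<Sum>b\<in>B-{b0}. ?c b)"
    using assms(3,7) by (simp add: sum.remove)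
  also have "(\<Sum>b\<in>B-{b0}. ?c b) \<le> (\<Sum>b\<in>B-{b0}. M)"
    by (rule sum_mono) (use assms in auto)
  also have "\<dots> = (card B - 1) * M" using assms(3,7) by simp
  finally have "nB * M \<le> ?c b0 + (card B - 1) * M" using assms(6) by simp
  moreover have "card B \<ge> 1" using assms(3,7) by (metis One_nat_def Suc_leI card_gt_0_iff empty_iff)
  ultimately have "nB * M \<le> ?c b0 + (nB - 1) * M" using assms(4)
    by (meson add_le_mono diff_le_mono le_refl mult_le_mono1 order_trans)
  moreover have "nB * M = M + (nB - 1) * M" using \<open>card B \<ge> 1\<close> assms(4) by (cases nB) auto
  ultimately have "M \<le> ?c b0" by linarith
  thus ?thesis using assms(5,7) by (simp add: le_antisym)
qed



context vector_space
begin

lemma card_span_indep: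
  assumes fa: "finite (UNIV :: 'a set)" and fb: "finite (UNIV :: 'b set)" and "finite B" "independent B"
  shows "card (span B) = card (UNIV :: 'a set) ^ card B"
  using assms(3,4)
proof (induction B rule: finite_induct)
  case empty
  then show ?case by simp
next
  case (insert b B)
  have ib: "independent B" "b \<notin> span B" using insert.prems insert.hyps(2)
    by (auto simp: independent_insert)
  have fs: "finite (span B)" using finite_subset[OF subset_UNIV fb] .
  have eq: "span (insert b B) = (\<lambda>(c, w). c *s b + w) ` (UNIV \<times> span B)"
  proof (rule set_eqI, rule iffI)
    fix x assume "x \<in> span (insert b B)"
    then obtain k where "x - k *s b \<in> span B" by (auto simp: span_insert)
    thus "x \<in> (\<lambda>(c, w). c *s b + w) ` (UNIV \<times> span B)"
      by (intro image_eqI[of _ _ "(k, x - k *s b)"]) auto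
  next
    fix x assume "x \<in> (\<lambda>(c, w). c *s b + w) ` (UNIV \<times> span B)"
    then obtain c w where "w \<in> span B" "x = c *s b + w" by auto
    thus "x \<in> span (insert b B)" unfolding span_insert by (intro CollectI exI[of _ c]) simp
  qed
  have inj: "inj_on (\<lambda>(c, w). c *s b + w) (UNIV \<times> span B)"
  proof (rule inj_onI, clarsimp)
    fix c w c' w' assume w: "w \<in> span B" "w' \<in> span B" and e: "c *s b + w = c' *s b + w'"
    hence "(c - c') *s b = w' - w" by (simp add: algebra_simps scale_left_diff_distrib)
    hence "(c - c') *s b \<in> span B" using w span_diff by simp
    hence "c = c'"
    proof (rule contrapos_pp)
      assume "c \<noteq> c'"
      hence "b = inverse (c - c') *s ((c - c') *s b)" by (simp add: scale_scale)
      thus "(c - c') *s b \<notin> span B" using ib(2) span_scale[of "(c - c') *s b" B "inverse (c - c')"] by auto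
    qed
    thus "c = c' \<and> w = w'" using e by simp
  qed
  have "card (span (insert b B)) = card ((UNIV :: 'a set) \<times> span B)"
    using card_image[OF inj] eq by simp
  also have "\<dots> = card (UNIV :: 'a set) * card (span B)" by (simp add: card_cartesian_product)
  finally show ?case using insert.IH[OF ib(1)] insert.hyps by simp
qed

lemma card_subspace_dim:
  assumes fa: "finite (UNIV :: 'a set)" and fb: "finite (UNIV :: 'b set)" and "subspace W"
  shows "card W = card (UNIV :: 'a set) ^ dim W"
proof -
  obtain B where B: "B \<subseteq> W" "independent B" "W \<subseteq> span B" "card B = dim W"
    by (rule basis_exists[of W])
  have sB: "span B = W" by (intro antisym span_minimal[OF B(1) assms(3)] B(3))
  have fB: "finite B" using finite_subset[OF subset_UNIV fb] by blast
  have "card (span B) = card (UNIV :: 'a set) ^ card B" by (rule card_span_indep[OF fa fb fB B(2)])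
  thus ?thesis by (simp only: sB B(4))
qed

end

lemma vs_sc:
  assumes "field_embedding emb"
  shows "vector_space (sc emb)"
proof -
  have e: "emb 1 = 1" "\<And>x y. emb (x + y) = emb x + emb y" "\<And>x y. emb (x * y) = emb x * emb y"
    using assms by (auto simp: field_embedding_def)
  show ?thesis
    by unfold_locales (auto simp: sc_def bscale_def e algebra_simps)
qed



definition line :: "'b::field \<times> 'b \<Rightarrow> ('b \<times> 'b) set" where
  "line v = range (\<lambda>c. bscale c v)"

lemma bscale_simps[simp]: "bscale c (x, y) = (c * x, c * y)"
  by (simp add: bscale_def)

lemma pair_eq_0[simp]: "(a, b) = 0 \<longleftrightarrow> a = 0 \<and> b = 0"
  by (simp add: zero_prod_def)

lemma bscale_bscale: "bscale d (bscale c v) = bscale (d * c) v"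
  by (simp add: bscale_def mult.assoc)

lemma in_line: "u \<in> line v \<longleftrightarrow> (\<exists>c. u = bscale c v)"
  by (auto simp: line_def)

lemma zero_in_line: "0 \<in> line v"
  unfolding in_line by (rule exI[of _ 0]) (simp add: bscale_def)

lemma self_in_line: "v \<in> line v"
  unfolding in_line by (rule exI[of _ 1]) (simp add: bscale_def)

lemma line_eq:
  assumes "u \<noteq> 0" "u \<in> line v"
  shows "line u = line v"
proof -
  obtain c where c: "u = bscale c v" using assms(2) by (auto simp: in_line)
  have "c \<noteq> 0" using assms(1) c by (auto simp: bscale_def)
  have "v = bscale (inverse c) u" using c \<open>c \<noteq> 0\<close> by (simp add: bscale_def mult.assoc[symmetric])
  show ?thesis
  proof (rule set_eqI)
    fix w
    show "w \<in> line u \<longleftrightarrow> w \<in> line v"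
      unfolding in_line using c \<open>v = bscale (inverse c) u\<close>
      by (metis bscale_bscale)
  qed
qed

lemma line_disj:
  assumes "line v \<noteq> line w"
  shows "line v \<inter> line w = {0}"
proof -
  { fix u assume u: "u \<in> line v" "u \<in> line w" "u \<noteq> 0"
    hence False using line_eq[OF u(3) u(1)] line_eq[OF u(3) u(2)] assms by simp }
  thus ?thesis using zero_in_line by blast
qed



locale herm =
  fixes Q :: nat and h :: "'b::{field,finite} \<times> 'b \<Rightarrow> 'b \<times> 'b \<Rightarrow> 'b"
  assumes cardK: "card (UNIV::'b set) = Q * Q"
  and Q2: "2 \<le> Q"
  and fadd: "\<And>x y::'b. (x + y) ^ Q = x ^ Q + y ^ Q"
  and herm: "hermitian_form (\<lambda>x. x ^ Q) h"
  and nd: "nondegenerate h"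
begin

definition sg :: "'b \<Rightarrow> 'b" where "sg x = x ^ Q"

lemma sg_add[simp]: "sg (x + y) = sg x + sg y" by (simp add: sg_def fadd)
lemma sg_mult[simp]: "sg (x * y) = sg x * sg y" by (simp add: sg_def power_mult_distrib)
lemma sg_0[simp]: "sg 0 = 0" using Q2 by (simp add: sg_def)
lemma sg_1[simp]: "sg 1 = 1" by (simp add: sg_def)
lemma sg_minus[simp]: "sg (- x) = - sg x"
proof -
  have "sg (- x) + sg x = 0" using sg_add[of "- x" x] by simp
  thus ?thesis by (simp add: eq_neg_iff_add_eq_0)
qed
lemma sg_diff[simp]: "sg (x - y) = sg x - sg y"
  using sg_add[of x "- y"] by simp
lemma pow_QQ: "x ^ (Q * Q) = (x::'b)"
  using ff_pow_card[of x] cardK by simp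
lemma sg_sg[simp]: "sg (sg x) = x"
  by (simp add: sg_def pow_QQ flip: power_mult)
lemma sg_inj: "sg x = sg y \<longleftrightarrow> x = y"
proof
  assume "sg x = sg y" hence "sg (sg x) = sg (sg y)" by simp
  thus "x = y" by simp
qed simp
lemma sg_eq_0[simp]: "sg x = 0 \<longleftrightarrow> x = 0"
  using sg_inj[of x 0] by simp

lemma h_add1: "h (u + v) w = h u w + h v w"
  using herm unfolding hermitian_form_def by blast
lemma h_scale1: "h (bscale c u) v = c * h u v"
  using herm unfolding hermitian_form_def by blast
lemma h_sym: "h v u = sg (h u v)"
  using herm unfolding hermitian_form_def sg_def by blast
lemma h_add2: "h w (u + v) = h w u + h w v"
proof -
  have "h w (u + v) = sg (h (u + v) w)" by (rule h_sym)
  also have "\<dots> = sg (h u w) + sg (h v w)" by (simp add: h_add1)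
  also have "\<dots> = h w u + h w v" by (simp add: h_sym[of w u] h_sym[of w v])
  finally show ?thesis .
qed
lemma h_scale2: "h u (bscale c v) = sg c * h u v"
proof -
  have "h u (bscale c v) = sg (h (bscale c v) u)" by (rule h_sym)
  also have "\<dots> = sg c * sg (h v u)" by (simp add: h_scale1)
  also have "\<dots> = sg c * h u v" by (simp add: h_sym[of u v])
  finally show ?thesis .
qed

lemma decomp: "(x, y) = bscale x (1, 0) + bscale y (0, 1)"
  by simp

lemma h_second: "h v (x, y) = sg x * h v (1, 0) + sg y * h v (0, 1)"
  by (subst decomp) (simp only: h_add2 h_scale2)
lemma h_first: "h (x, y) w = x * h (1, 0) w + y * h (0, 1) w"
  by (subst decomp) (simp only: h_add1 h_scale1)

definition "ca = h (1, 0) (1, 0)"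
definition "cb = h (1, 0) (0, 1)"
definition "cd = h (0, 1) (0, 1)"

lemma sg_ca[simp]: "sg ca = ca" unfolding ca_def using h_sym[of "(1,0)" "(1,0)"] by simp
lemma sg_cd[simp]: "sg cd = cd" unfolding cd_def using h_sym[of "(0,1)" "(0,1)"] by simp
lemma h21: "h (0, 1) (1, 0) = sg cb" unfolding cb_def by (rule h_sym)

lemma h_formula:
  "h (x, y) (x', y') = x * sg x' * ca + x * sg y' * cb + y * sg x' * sg cb + y * sg y' * cd"
proof -
  have 1: "h (1, 0) (x', y') = sg x' * ca + sg y' * cb"
    by (subst h_second) (simp add: ca_def cb_def)
  have 2: "h (0, 1) (x', y') = sg x' * sg cb + sg y' * cd"
    by (subst h_second) (simp add: h21 cd_def)
  show ?thesis by (subst h_first) (simp add: 1 2 distrib_left mult.assoc)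
qed

lemma h_iso_line: "h (1, t) (1, t) = ca + sg t * cb + t * sg cb + t * sg t * cd"
  by (simp add: h_formula)

lemma ndet: "ca * cd \<noteq> cb * sg cb"
proof
  assume E: "ca * cd = cb * sg cb"
  show False
  proof (cases "cd = 0")
    case False
    have "h (cd, - cb) w = 0" for w
    proof -
      obtain x' y' where w: "w = (x', y')" by (cases w)
      have "h (cd, - cb) w = sg x' * (ca * cd - cb * sg cb)"
        unfolding w h_formula by (simp add: algebra_simps)
      thus ?thesis using E by simp
    qed
    hence "(cd, - cb) = 0" using nd unfolding nondegenerate_def by blast
    thus False using False by simp
  next
    case True
    hence "cb = 0" using E by simp
    have "h (0, 1) w = 0" for w
    proof -
      obtain x' y' where w: "w = (x', y')" by (cases w)
      show ?thesis unfolding w h_formula using True \<open>cb = 0\<close> by simp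
    qed
    hence "((0::'b), (1::'b)) = 0" using nd unfolding nondegenerate_def by blast
    thus False by simp
  qed
qed


lemma sg_pow: "sg (x ^ n) = sg x ^ n"
  by (induction n) simp_all

lemma pow_Q1: "x ^ (Q + 1) = x * sg x"
  by (simp add: sg_def)

lemma norm_count:
  assumes "c \<noteq> 0" "sg c = c"
  shows "card {s. s ^ (Q + 1) = c} = Q + 1"
proof -
  let ?G = "UNIV - {0::'b}"
  let ?f = "\<lambda>x::'b. x ^ (Q + 1)"
  let ?B = "{y::'b. y \<noteq> 0 \<and> sg y = y}"
  have fG: "?f ` ?G \<subseteq> ?B"
  proof clarify
    fix x :: 'b assume "x \<noteq> 0"
    show "x ^ (Q + 1) \<noteq> 0 \<and> sg (x ^ (Q + 1)) = x ^ (Q + 1)"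
    proof
      show "x ^ (Q + 1) \<noteq> 0" using \<open>x \<noteq> 0\<close> by simp
      have "sg (x ^ (Q + 1)) = sg (x * sg x)" by (simp only: pow_Q1)
      also have "\<dots> = x * sg x" by (simp only: sg_mult sg_sg mult.commute)
      also have "\<dots> = x ^ (Q + 1)" by (simp only: pow_Q1)
      finally show "sg (x ^ (Q + 1)) = x ^ (Q + 1)" .
    qed
  qed
  have Bsub: "?B \<subseteq> {y. y ^ (Q - 1) = 1}"
  proof clarify
    fix y :: 'b assume y: "y \<noteq> 0" "sg y = y"
    have QS: "Q = Suc (Q - 1)" using Q2 by simp
    have "y ^ Q = y * y ^ (Q - 1)" by (subst QS) (rule power_Suc)
    hence "y * y ^ (Q - 1) = y ^ Q" by simp
    hence "y * y ^ (Q - 1) = y * 1" using y(2) by (simp add: sg_def)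
    thus "y ^ (Q - 1) = 1" by (rule iffD1[OF mult_left_cancel[OF y(1)]])
  qed
  have cB: "card ?B \<le> Q - 1"
    using le_trans[OF card_mono[OF finite Bsub] card_pow_eq[of "Q - 1" 1]] Q2 by simp
  have fib: "card {x\<in>?G. ?f x = b} \<le> Q + 1" for b
  proof -
    have "{x\<in>?G. ?f x = b} \<subseteq> {x. x ^ (Q + 1) = b}" by blast
    thus ?thesis using le_trans[OF card_mono[OF finite] card_pow_eq[of "Q + 1" b]] by simp
  qed
  have "card ?G = Q * Q - 1" using cardK by (simp add: card_Diff_singleton)
  also have "\<dots> = (Q - 1) * (Q + 1)" using Q2 by (cases Q) simp_all
  finally have cG: "card ?G = (Q - 1) * (Q + 1)" .
  have "card {x\<in>?G. ?f x = c} = Q + 1"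
    by (rule fiber_count[OF _ fG _ cB fib cG]) (simp_all add: assms)
  moreover have "{x\<in>?G. ?f x = c} = {s. s ^ (Q + 1) = c}" using assms(1) by auto
  ultimately show ?thesis by simp
qed

lemma tr_count:
  assumes "sg c = c"
  shows "card {z. z + sg z = c} = Q"
proof -
  let ?G = "UNIV :: 'b set"
  let ?f = "\<lambda>x::'b. x + sg x"
  let ?B = "{y::'b. sg y = y}"
  have fG: "?f ` ?G \<subseteq> ?B" by (auto simp: add.commute)
  have Bsub: "?B \<subseteq> {y. y ^ Q + (-1) * y = 0}" by (auto simp: sg_def)
  have cB: "card ?B \<le> Q"
    using le_trans[OF card_mono[OF finite Bsub] card_pow_add[OF Q2, of "-1" 0]] .
  have fib: "card {x\<in>?G. ?f x = b} \<le> Q" for b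
  proof -
    have "{x\<in>?G. ?f x = b} = {x. x ^ Q + 1 * x = b}" by (auto simp: sg_def add.commute)
    thus ?thesis using card_pow_add[of Q 1 b] Q2 by simp
  qed
  have cG: "card ?G = Q * Q" by (rule cardK)
  have "card {x\<in>?G. ?f x = c} = Q"
    by (rule fiber_count[OF _ fG _ cB fib cG]) (use assms in auto)
  thus ?thesis by simp
qed

lemma affine_card:
  assumes "(d::'b) \<noteq> 0"
  shows "card {t. P (d * t + e)} = card {s. P s}"
proof -
  have "{t. P (d * t + e)} = (\<lambda>s. (s - e) / d) ` {s. P s}"
  proof (rule set_eqI, rule iffI)
    fix t assume "t \<in> {t. P (d * t + e)}"
    thus "t \<in> (\<lambda>s. (s - e) / d) ` {s. P s}"
      by (intro image_eqI[of _ _ "d * t + e"]) (use assms in auto)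
  qed (use assms in auto)
  moreover have "inj_on (\<lambda>s. (s - e) / d) {s. P s}"
    by (rule inj_onI) (use assms in simp)
  ultimately show ?thesis by (simp add: card_image)
qed

lemma iso_count: "card {t. h (1, t) (1, t) = 0} = (if cd = 0 then Q else Q + 1)"
proof (cases "cd = 0")
  case False
  define c where "c = cb * sg cb - ca * cd"
  have c0: "c \<noteq> 0" using ndet by (simp add: c_def)
  have sc: "sg c = c" by (simp add: c_def mult.commute)
  have key: "(cd * t + cb) ^ (Q + 1) = cd * h (1, t) (1, t) + c" for t
  proof -
    have "(cd * t + cb) ^ (Q + 1) = (cd * t + cb) * (cd * sg t + sg cb)"
      by (simp only: pow_Q1 sg_add sg_mult sg_cd)
    also have "\<dots> = cd * (ca + sg t * cb + t * sg cb + t * sg t * cd) + c"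
      by (simp add: c_def algebra_simps)
    finally show ?thesis by (simp only: h_iso_line)
  qed
  have E: "h (1, t) (1, t) = 0 \<longleftrightarrow> (cd * t + cb) ^ (Q + 1) = c" for t
    unfolding key[of t] using False by simp
  have "{t. h (1, t) (1, t) = 0} = {t. (cd * t + cb) ^ (Q + 1) = c}" by (rule Collect_cong, rule E)
  also have "card \<dots> = card {s. s ^ (Q + 1) = c}"
    by (rule affine_card[OF False, where P = "\<lambda>s. s ^ (Q + 1) = c"])
  also have "\<dots> = Q + 1" by (rule norm_count[OF c0 sc])
  finally show ?thesis using False by simp
next
  case True
  have b0: "cb \<noteq> 0" using ndet True by auto
  have "{t. h (1, t) (1, t) = 0} = {t. (sg cb * t + 0) + sg (sg cb * t + 0) = - ca}"
    using True by (auto simp: h_iso_line algebra_simps eq_neg_iff_add_eq_0)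
  also have "card \<dots> = card {z. z + sg z = - ca}"
    by (rule affine_card[where P = "\<lambda>z. z + sg z = - ca"]) (use b0 in simp)
  also have "\<dots> = Q" by (rule tr_count) simp
  finally show ?thesis using True by simp
qed

end


lemma pairs_card:
  assumes "finite A" "\<And>x. x \<in> A \<Longrightarrow> f x \<in> A" "\<And>x. x \<in> A \<Longrightarrow> f x \<noteq> x"
    "\<And>x. x \<in> A \<Longrightarrow> f (f x) = x"
  shows "card {{x, f x} | x. x \<in> A} = card A div 2"
proof -
  let ?C = "{{x, f x} | x. x \<in> A}"
  have U: "\<Union>?C = A" using assms(2) by blast
  have fC: "finite ?C" using assms(1) by simp
  have pw: "pairwise disjnt ?C"
  proof (rule pairwiseI, clarify)
    fix x y assume xy: "x \<in> A" "y \<in> A" "{x, f x} \<noteq> {y, f y}"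
    show "disjnt {x, f x} {y, f y}"
    proof (rule ccontr)
      assume "\<not> disjnt {x, f x} {y, f y}"
      hence "x = y \<or> x = f y \<or> f x = y \<or> f x = f y" by (auto simp: disjnt_def)
      hence "{x, f x} = {y, f y}"
      proof (elim disjE)
        assume "x = f y" thus ?thesis using assms(4)[OF xy(2)] by (simp add: insert_commute)
      next
        assume "f x = y" thus ?thesis using assms(4)[OF xy(1)] by (simp add: insert_commute)
      next
        assume "f x = f y" hence "f (f x) = f (f y)" by simp
        hence "x = y" using assms(4)[OF xy(1)] assms(4)[OF xy(2)] by simp
        thus ?thesis by simp
      qed simp
      thus False using xy(3) by simp
    qed
  qed
  have c2: "card X = 2" if X: "X \<in> ?C" for X
  proof -
    obtain x where x: "x \<in> A" "X = {x, f x}" using X by blast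
    have "x \<noteq> f x" using assms(3)[OF x(1)] by simp
    thus ?thesis using x(2) by simp
  qed
  have "card (\<Union>?C) = sum card ?C" by (rule card_Union_disjoint[OF pw]) auto
  hence "card A = sum card ?C" by (simp only: U)
  also have "\<dots> = sum (\<lambda>_. 2) ?C" by (rule sum.cong) (simp_all add: c2)
  also have "\<dots> = 2 * card ?C" by simp
  finally show ?thesis by simp
qed

locale herm_T = herm Q h for Q and h :: "'b::{field,finite} \<times> 'b \<Rightarrow> 'b \<times> 'b \<Rightarrow> 'b" +
  fixes T :: "'b \<Rightarrow> 'b"
  assumes T0: "T 0 = 0"
  and Tnz: "\<And>y. (\<forall>c. T (c * y) = 0) \<Longrightarrow> y = 0"
begin

definition "tiso D \<longleftrightarrow> (\<forall>u\<in>D. \<forall>w\<in>D. T (h u w) = 0)"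

lemma tiso_line: "tiso (line v) \<longleftrightarrow> h v v = 0"
proof
  assume ti: "tiso (line v)"
  have "T (h (bscale c v) v) = 0" for c
  proof -
    have "bscale c v \<in> line v" by (auto simp: in_line)
    thus ?thesis using ti self_in_line[of v] unfolding tiso_def by blast
  qed
  hence "\<forall>c. T (c * h v v) = 0" by (simp add: h_scale1)
  thus "h v v = 0" by (rule Tnz)
next
  assume H: "h v v = 0"
  show "tiso (line v)" unfolding tiso_def
  proof (intro ballI)
    fix u w assume uw: "u \<in> line v" "w \<in> line v"
    obtain c where c: "u = bscale c v" using uw(1) unfolding in_line by blast
    obtain e where e: "w = bscale e v" using uw(2) unfolding in_line by blast
    have "h u w = c * (sg e * h v v)" unfolding c e by (simp only: h_scale1 h_scale2 mult.left_commute)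
    thus "T (h u w) = 0" using H by (simp add: T0)
  qed
qed

lemma polar_line: "polar (\<lambda>u w. T (h u w)) (line v) = {u. h v u = 0}"
proof (rule set_eqI)
  fix u
  have "u \<in> polar (\<lambda>u w. T (h u w)) (line v) \<longleftrightarrow> (\<forall>x\<in>line v. T (h x u) = 0)"
    by (simp add: polar_def)
  also have "\<dots> \<longleftrightarrow> (\<forall>c. T (c * h v u) = 0)"
  proof
    assume H: "\<forall>x\<in>line v. T (h x u) = 0"
    show "\<forall>c. T (c * h v u) = 0"
    proof
      fix c
      have "bscale c v \<in> line v" by (auto simp: in_line)
      hence "T (h (bscale c v) u) = 0" using H by blast
      thus "T (c * h v u) = 0" by (simp only: h_scale1)
    qed
  next
    assume H: "\<forall>c. T (c * h v u) = 0"
    show "\<forall>x\<in>line v. T (h x u) = 0"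
    proof
      fix x assume "x \<in> line v"
      then obtain c where "x = bscale c v" unfolding in_line by blast
      thus "T (h x u) = 0" using H by (simp only: h_scale1)
    qed
  qed
  also have "\<dots> \<longleftrightarrow> h v u = 0" using Tnz T0 by auto
  finally show "u \<in> polar (\<lambda>u w. T (h u w)) (line v) \<longleftrightarrow> u \<in> {u. h v u = 0}" by simp
qed

definition "perp v = (sg (h v (0, 1)), - sg (h v (1, 0)))"

lemma perp_nz: assumes "v \<noteq> 0" shows "perp v \<noteq> 0"
proof
  assume "perp v = 0"
  hence "h v (0, 1) = 0" "h v (1, 0) = 0" by (simp_all add: perp_def)
  hence "h v w = 0" for w
  proof -
    obtain a b where w: "w = (a, b)" by (cases w)
    have "h v (a, b) = sg a * h v (1, 0) + sg b * h v (0, 1)" by (rule h_second)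
    thus ?thesis using w \<open>h v (0, 1) = 0\<close> \<open>h v (1, 0) = 0\<close> by simp
  qed
  hence "v = 0" using nd unfolding nondegenerate_def by blast
  thus False using assms by simp
qed

lemma ker_line: assumes "v \<noteq> 0" shows "{u. h v u = 0} = line (perp v)"
proof (rule set_eqI)
  fix u :: "'b \<times> 'b"
  obtain x y where u: "u = (x, y)" by (cases u)
  define al where "al = sg (h v (1, 0))"
  define be where "be = sg (h v (0, 1))"
  have nz: "al \<noteq> 0 \<or> be \<noteq> 0" using perp_nz[OF assms] by (auto simp: perp_def al_def be_def)
  have "h v u = 0 \<longleftrightarrow> sg (h v u) = 0" by simp
  also have "sg (h v u) = x * al + y * be" unfolding u al_def be_def
    by (subst h_second) simp
  finally have e: "h v u = 0 \<longleftrightarrow> x * al + y * be = 0" .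
  have "x * al + y * be = 0 \<longleftrightarrow> (\<exists>c. x = c * be \<and> y = - (c * al))"
  proof
    assume H: "x * al + y * be = 0"
    show "\<exists>c. x = c * be \<and> y = - (c * al)"
    proof (cases "be = 0")
      case True
      hence "al \<noteq> 0" using nz by simp
      hence "x = 0" using H True by simp
      show ?thesis
        by (rule exI[of _ "- y / al"]) (use True \<open>x = 0\<close> \<open>al \<noteq> 0\<close> in simp)
    next
      case False
      have "y * be = - (x * al)" using H by (simp add: eq_neg_iff_add_eq_0 add.commute)
      hence "y = - (x * al) / be" using False by (simp add: field_simps)
      show ?thesis
        by (rule exI[of _ "x / be"]) (use False \<open>y = - (x * al) / be\<close> in simp)
    qed
  next
    assume "\<exists>c. x = c * be \<and> y = - (c * al)"
    thus "x * al + y * be = 0" by (auto simp: algebra_simps)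
  qed
  moreover have "u \<in> line (perp v) \<longleftrightarrow> (\<exists>c. x = c * be \<and> y = - (c * al))"
    unfolding in_line u perp_def al_def be_def by simp
  ultimately show "u \<in> {u. h v u = 0} \<longleftrightarrow> u \<in> line (perp v)" using e by simp
qed

end


lemma line_bscale_eq:
  assumes "c \<noteq> 0" "v \<noteq> 0" shows "line (bscale c v) = line v"
proof (rule line_eq)
  show "bscale c v \<noteq> 0" using assms by (cases v) simp
  show "bscale c v \<in> line v" unfolding in_line by blast
qed

lemma S_char: "line ` (UNIV - {0::'b::field \<times> 'b}) = insert (line (0, 1)) (range (\<lambda>t. line (1, t)))"
proof (rule set_eqI, rule iffI)
  fix D assume "D \<in> line ` (UNIV - {0::'b \<times> 'b})"
  then obtain vv where vv: "vv \<noteq> 0" "D = line vv" by blast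
  obtain x y where "vv = (x, y)" by (cases vv)
  hence v: "(x, y) \<noteq> 0" "D = line (x, y)" using vv by simp_all
  show "D \<in> insert (line (0, 1)) (range (\<lambda>t. line (1, t)))"
  proof (cases "x = 0")
    case True
    hence "y \<noteq> 0" using v by simp
    have "line (bscale (inverse y) (x, y)) = line (x, y)"
      by (rule line_bscale_eq) (use \<open>y \<noteq> 0\<close> v(1) in simp_all)
    hence "line (x, y) = line (bscale (inverse y) (x, y))" by (rule sym)
    also have "\<dots> = line (0, 1)" using True \<open>y \<noteq> 0\<close> by simp
    finally show ?thesis using v by simp
  next
    case False
    have "line (bscale (inverse x) (x, y)) = line (x, y)"
      by (rule line_bscale_eq) (use False v(1) in simp_all)
    hence "line (x, y) = line (bscale (inverse x) (x, y))" by (rule sym)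
    also have "\<dots> = line (1, y / x)" using False by (simp add: field_simps)
    finally show ?thesis using v by simp
  qed
next
  fix D assume "D \<in> insert (line (0, 1)) (range (\<lambda>t. line (1::'b, t)))"
  thus "D \<in> line ` (UNIV - {0})" by auto
qed

lemma L0_notin: "line (0, 1) \<notin> range (\<lambda>t. line (1::'b::field, t))"
proof
  assume "line (0, 1) \<in> range (\<lambda>t. line (1::'b, t))"
  then obtain t where "line (0, 1) = line (1::'b, t)" by auto
  hence "(1, t) \<in> line ((0::'b), (1::'b))" using self_in_line[of "(1::'b, t)"] by simp
  thus False unfolding in_line by auto
qed

lemma inj_Lt: "inj (\<lambda>t. line (1::'b::field, t))"
proof (rule injI)
  fix s t :: 'b assume "line (1, s) = line (1, t)"
  hence "(1, s) \<in> line (1, t)" using self_in_line[of "(1::'b, s)"] by simp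
  then obtain c where "(1, s) = bscale c (1, t)" unfolding in_line by blast
  thus "s = t" by simp
qed

context herm_T
begin

abbreviation "pol \<equiv> polar (\<lambda>u w. T (h u w))"

lemma card_S: "card (line ` (UNIV - {0::'b \<times> 'b})) = Q * Q + 1"
proof -
  have "inj (\<lambda>t. line (1::'b, t))" by (rule inj_Lt)
  hence "card (range (\<lambda>t. line (1::'b, t))) = card (UNIV :: 'b set)" by (rule card_image)
  hence "card (range (\<lambda>t. line (1::'b, t))) = Q * Q" using cardK by simp
  moreover have fin: "finite (range (\<lambda>t. line (1::'b, t)))" by (rule finite_imageI) simp
  ultimately show ?thesis unfolding S_char using card_insert_disjoint[OF fin L0_notin] by simp
qed

lemma card_gen: "card {D \<in> line ` (UNIV - {0::'b \<times> 'b}). tiso D} = Q + 1"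
proof -
  let ?A = "(\<lambda>t. line (1, t)) ` {t. h (1, t) (1, t) = 0}"
  have A: "{D \<in> range (\<lambda>t. line (1::'b, t)). tiso D} = ?A"
    by (auto simp: tiso_line)
  have cA: "card ?A = card {t. h (1, t) (1, t) = 0}"
    by (rule card_image) (rule inj_on_subset[OF inj_Lt], simp)
  have nA: "line (0, 1) \<notin> ?A" using L0_notin by blast
  have t0: "tiso (line (0, 1)) \<longleftrightarrow> cd = 0" by (simp add: tiso_line cd_def)
  show ?thesis
  proof (cases "cd = 0")
    case True
    have "{D \<in> line ` (UNIV - {0::'b \<times> 'b}). tiso D} = insert (line (0, 1)) ?A"
      unfolding S_char using A t0 True by auto
    thus ?thesis using cA nA iso_count True by simp
  next
    case False
    have "{D \<in> line ` (UNIV - {0::'b \<times> 'b}). tiso D} = ?A"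
      unfolding S_char using A t0 False by auto
    thus ?thesis using cA iso_count False by simp
  qed
qed

lemma nongen_props:
  assumes "D \<in> line ` (UNIV - {0::'b \<times> 'b})" "\<not> tiso D"
  shows "pol D \<in> line ` (UNIV - {0}) \<and> D \<inter> pol D = {0} \<and> \<not> tiso (pol D)
    \<and> pol (pol D) = D \<and> pol D \<noteq> D"
proof -
  obtain v where v: "v \<noteq> 0" "D = line v" using assms(1) by auto
  have hv: "h v v \<noteq> 0" using assms(2) v by (simp add: tiso_line)
  define w where "w = perp v"
  have w0: "w \<noteq> 0" using perp_nz[OF v(1)] by (simp add: w_def)
  have pD: "pol D = line w" using v polar_line ker_line w_def by simp
  have pD': "pol D = {u. h v u = 0}" using v polar_line by simp
  have S1: "pol D \<in> line ` (UNIV - {0})" using pD w0 by simp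
  have I: "D \<inter> pol D = {0}"
  proof
    show "D \<inter> pol D \<subseteq> {0}"
    proof
      fix u assume "u \<in> D \<inter> pol D"
      hence u: "u \<in> line v" "h v u = 0" using v pD' by auto
      then obtain c where c: "u = bscale c v" unfolding in_line by blast
      hence "sg c * h v v = 0" using u(2) by (simp only: h_scale2)
      hence "c = 0" using hv by simp
      thus "u \<in> {0}" using c by (simp add: bscale_def)
    qed
    show "{0} \<subseteq> D \<inter> pol D" using pD v by (simp add: zero_in_line)
  qed
  have "h v w = 0" using pD pD' self_in_line[of w] by blast
  hence hwv: "h w v = 0" using h_sym[of w v] by simp
  have pw: "pol (line w) = line (perp w)" using polar_line ker_line[OF w0] by simp
  have "v \<in> line (perp w)" using pw polar_line[of w] hwv by auto
  hence "line v = line (perp w)" by (rule line_eq[OF v(1)])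
  hence PP: "pol (pol D) = D" using pD pw v by simp
  have NT: "\<not> tiso (pol D)"
  proof
    assume "tiso (pol D)"
    hence "h w w = 0" using pD tiso_line by simp
    hence "w \<in> pol (line w)" using polar_line by simp
    hence "w \<in> D \<inter> pol D" using PP pD self_in_line[of w] by simp
    thus False using I w0 by simp
  qed
  have "pol D \<noteq> D"
  proof
    assume "pol D = D"
    hence "v \<in> D \<inter> pol D" using v self_in_line by simp
    thus False using I v by blast
  qed
  thus ?thesis using S1 I NT PP by simp
qed

end


lemma trace_nonzero:
  fixes q m :: nat
  assumes q2: "q \<ge> 2" and m1: "m \<ge> 1" and cK: "card (UNIV::'b::{field,finite} set) = q ^ (4*m - 2)"
  shows "\<exists>z::'b. rel_trace q m z \<noteq> 0"
proof -
  define N where "N = q ^ (2 * (2 * m - 2))"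
  define P where "P = (\<Sum>i\<in>{0..2*m-2}. monom (1::'b) (q ^ (2 * i)))"
  have pP: "poly P z = rel_trace q m z" for z
    by (simp add: P_def rel_trace_def poly_sum poly_monom)
  have q1: "1 < q" using q2 by simp
  have "coeff P N = (\<Sum>i\<in>{0..2*m-2}. if i = 2*m-2 then 1 else 0)"
    unfolding P_def coeff_sum coeff_monom N_def
    by (rule sum.cong) (simp_all add: power_inject_exp[OF q1])
  also have "\<dots> = 1" by simp
  finally have cN: "coeff P N = 1" .
  hence P0: "P \<noteq> 0" by auto
  have dP: "degree P \<le> N"
  proof (rule degree_le, intro allI impI)
    fix j assume "N < j"
    have "q ^ (2 * i) \<noteq> j" if "i \<in> {0..2*m-2}" for i
    proof -
      have "q ^ (2 * i) \<le> N" unfolding N_def using that q1 by (intro power_increasing) auto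
      thus ?thesis using \<open>N < j\<close> by simp
    qed
    thus "coeff P j = 0" unfolding P_def coeff_sum coeff_monom by (intro sum.neutral) auto
  qed
  have "card {z. poly P z = 0} \<le> N" by (rule root_bound[OF P0 dP])
  moreover have "N < q ^ (4*m - 2)" unfolding N_def using q1 m1
    by (intro power_strict_increasing) auto
  ultimately have "card {z::'b. poly P z = 0} < card (UNIV :: 'b set)" using cK by simp
  hence "{z::'b. poly P z = 0} \<noteq> UNIV" by auto
  then obtain z where "poly P z \<noteq> 0" by auto
  thus ?thesis using pP by auto
qed

lemma line_subspace:
  assumes "field_embedding emb"
  shows "module.subspace (sc emb) (line v)"
proof -
  interpret V: vector_space "sc emb" by (rule vs_sc[OF assms])
  show ?thesis unfolding V.subspace_def
  proof (intro conjI ballI allI)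
    show "0 \<in> line v" by (rule zero_in_line)
  next
    fix x y assume "x \<in> line v" "y \<in> line v"
    then obtain c d where "x = bscale c v" "y = bscale d v" unfolding in_line by blast
    hence "x + y = bscale (c + d) v" by (simp add: bscale_def algebra_simps)
    thus "x + y \<in> line v" unfolding in_line by blast
  next
    fix a x assume "x \<in> line v"
    then obtain c where "x = bscale c v" unfolding in_line by blast
    hence "sc emb a x = bscale (emb a * c) v" by (simp add: sc_def bscale_bscale)
    thus "sc emb a x \<in> line v" unfolding in_line by blast
  qed
qed

lemma card_line:
  assumes "(v::'b::{field,finite} \<times> 'b) \<noteq> 0"
  shows "card (line v) = card (UNIV :: 'b set)"
proof -
  have "inj (\<lambda>c. bscale c v)"
  proof (rule injI)
    fix c d assume "bscale c v = bscale d v"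
    hence "c * fst v = d * fst v" "c * snd v = d * snd v" by (simp_all add: bscale_def)
    thus "c = d" using assms by (cases v) auto
  qed
  thus ?thesis unfolding line_def by (simp add: card_image)
qed



theorem mainTheorem13:
  fixes m q p k :: nat
    and emb :: "'a::{field,finite} \<Rightarrow> 'b::{field,finite}"
    and h :: "'b \<times> 'b \<Rightarrow> 'b \<times> 'b \<Rightarrow> 'b"
  assumes "m \<ge> 1"
    and "prime p" and "k \<ge> 1" and "q = p ^ k"
    and "card (UNIV :: 'a set) = q ^ 2"
    and "card (UNIV :: 'b set) = q ^ (4*m - 2)"
    and "field_embedding emb"
    and "hermitian_form (\<lambda>x. x ^ (q ^ (2*m - 1))) h"
    and "nondegenerate h"
  shows "\<exists>S. is_spread (sc emb) (2*m - 2) S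
     \<and> card {D\<in>S. is_generator (sc emb) (\<lambda>u v. rel_trace q m (h u v)) (2*m - 2) D}
         = q ^ (2*m - 1) + 1
     \<and> card {D\<in>S. \<not> is_generator (sc emb) (\<lambda>u v. rel_trace q m (h u v)) (2*m - 2) D}
         = q ^ (4*m - 2) - q ^ (2*m - 1)
     \<and> (\<forall>D\<in>S. \<not> is_generator (sc emb) (\<lambda>u v. rel_trace q m (h u v)) (2*m - 2) D \<longrightarrow>
           polar (\<lambda>u v. rel_trace q m (h u v)) D \<in> S
         \<and> D \<inter> polar (\<lambda>u v. rel_trace q m (h u v)) D = {0})
     \<and> card {{D, polar (\<lambda>u v. rel_trace q m (h u v)) D} | D.
               D \<in> S \<and> \<not> is_generator (sc emb) (\<lambda>u v. rel_trace q m (h u v)) (2*m - 2) D}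
         = (q ^ (4*m - 2) - q ^ (2*m - 1)) div 2"
proof -
  note m1 = assms(1) and pp = assms(2) and k1 = assms(3) and qd = assms(4) and cA = assms(5)
    and cB = assms(6) and emb = assms(7) and hf = assms(8) and ndg = assms(9)
  define Q where "Q = q ^ (2*m - 1)"
  have p2: "p \<ge> 2" using pp by (simp add: prime_ge_2_nat)
  have q2: "q \<ge> 2"
  proof -
    have "p ^ 1 \<le> p ^ k" using k1 p2 by (intro power_increasing) auto
    thus ?thesis using qd p2 by simp
  qed
  have QQ: "q ^ (4*m - 2) = Q * Q"
  proof -
    have "4*m - 2 = (2*m - 1) + (2*m - 1)" using m1 by simp
    thus ?thesis unfolding Q_def by (simp add: power_add)
  qed
  have Q2: "2 \<le> Q"
  proof -
    have "q ^ 1 \<le> q ^ (2*m - 1)" using m1 q2 by (intro power_increasing) auto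
    thus ?thesis using q2 Q_def by simp
  qed
  have cK: "card (UNIV :: 'b set) = Q * Q" using cB QQ by simp
  have cKp: "card (UNIV :: 'b set) = p ^ (k * (4*m - 2))" using cB qd by (simp add: power_mult)
  have QP: "Q = p ^ (k * (2*m - 1))" unfolding Q_def qd by (simp add: power_mult)
  have fadd: "\<And>x y::'b. (x + y) ^ Q = x ^ Q + y ^ Q"
    unfolding QP by (rule frob_add[OF pp cKp])
  have T0: "rel_trace q m (0::'b) = 0"
    unfolding rel_trace_def using q2 by (intro sum.neutral) (simp add: power_0_left)
  obtain z0 :: 'b where z0: "rel_trace q m z0 \<noteq> 0" using trace_nonzero[OF q2 m1 cB] by blast
  have Tnz: "y = 0" if "\<forall>c. rel_trace q m (c * y) = 0" for y :: 'b
  proof (rule ccontr)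
    assume "y \<noteq> 0"
    hence "rel_trace q m ((z0 / y) * y) = rel_trace q m z0" by simp
    thus False using that z0 by metis
  qed
  interpret HT: herm_T Q h "rel_trace q m"
    by unfold_locales (use cK Q2 fadd hf ndg T0 Tnz in \<open>simp_all add: Q_def\<close>)
  interpret V: vector_space "sc emb" by (rule vs_sc[OF emb])
  let ?T = "\<lambda>u v. rel_trace q m (h u v)"
  let ?S = "line ` (UNIV - {0::'b \<times> 'b})"
  let ?gen = "is_generator (sc emb) ?T (2*m - 2)"
  have ps: "proj_subspace (sc emb) (2*m - 2) D" if "D \<in> ?S" for D
  proof -
    from that obtain v where v: "v \<in> UNIV - {0}" "D = line v" by (rule imageE)
    have v0: "v \<noteq> 0" using v(1) by simp
    have sub: "V.subspace D" unfolding v(2) by (rule line_subspace[OF emb])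
    have cdim: "card D = card (UNIV :: 'a set) ^ V.dim D"
      by (rule V.card_subspace_dim[OF _ _ sub]) simp_all
    have c1: "card D = q ^ (4*m - 2)" unfolding v(2) card_line[OF v0] by (rule cB)
    have "q ^ (4*m - 2) = (q ^ 2) ^ V.dim D" using cdim c1 cA by simp
    hence "q ^ (4*m - 2) = q ^ (2 * V.dim D)" by (simp only: power_mult)
    moreover have q1: "1 < q" using q2 by simp
    ultimately have "4*m - 2 = 2 * V.dim D" using power_inject_exp[OF q1] by blast
    hence "V.dim D = 2*m - 2 + 1" using m1 by linarith
    thus ?thesis unfolding proj_subspace_def using sub by blast
  qed
  have gen_iff: "?gen D \<longleftrightarrow> HT.tiso D" if "D \<in> ?S" for D
    unfolding is_generator_def HT.tiso_def using ps[OF that] by simp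
  have spread: "is_spread (sc emb) (2*m - 2) ?S"
    unfolding is_spread_def
  proof (intro conjI ballI impI)
    fix W assume "W \<in> ?S" thus "proj_subspace (sc emb) (2*m - 2) W" by (rule ps)
  next
    fix W W' assume "W \<in> ?S" "W' \<in> ?S" "W \<noteq> W'"
    then obtain v w where "W = line v" "W' = line w" by blast
    thus "W \<inter> W' = {0}" using line_disj \<open>W \<noteq> W'\<close> by simp
  next
    show "\<Union>?S = UNIV"
    proof (rule set_eqI, rule iffI)
      fix u :: "'b \<times> 'b"
      show "u \<in> \<Union>?S"
      proof (cases "u = 0")
        case True
        have "line (1, 0) \<in> ?S" by simp
        moreover have "u \<in> line (1, 0)" using True zero_in_line by simp
        ultimately show ?thesis by blast
      next
        case False
        thus ?thesis using self_in_line[of u] by blast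
      qed
    qed simp
  qed
  have G: "{D\<in>?S. ?gen D} = {D\<in>?S. HT.tiso D}" using gen_iff by blast
  have cG: "card {D\<in>?S. ?gen D} = Q + 1" unfolding G by (rule HT.card_gen)
  have NG: "{D\<in>?S. \<not> ?gen D} = ?S - {D\<in>?S. ?gen D}" by blast
  have cNG: "card {D\<in>?S. \<not> ?gen D} = Q * Q - Q"
  proof -
    have "card {D\<in>?S. \<not> ?gen D} = card ?S - card {D\<in>?S. ?gen D}"
      unfolding NG by (rule card_Diff_subset) auto
    thus ?thesis using cG HT.card_S by simp
  qed
  have NP: "HT.pol D \<in> ?S \<and> D \<inter> HT.pol D = {0} \<and> \<not> ?gen (HT.pol D)
      \<and> HT.pol (HT.pol D) = D \<and> HT.pol D \<noteq> D" if "D \<in> ?S" "\<not> ?gen D" for D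
  proof -
    have "\<not> HT.tiso D" using that gen_iff by simp
    from HT.nongen_props[OF that(1) this] show ?thesis using gen_iff by blast
  qed
  let ?A = "{D\<in>?S. \<not> ?gen D}"
  have "card {{x, HT.pol x} | x. x \<in> ?A} = card ?A div 2"
    by (rule pairs_card) (use NP in auto)
  moreover have "{{x, HT.pol x} | x. x \<in> ?A} = {{D, HT.pol D} | D. D \<in> ?S \<and> \<not> ?gen D}"
    by simp
  ultimately have cP: "card {{D, HT.pol D} | D. D \<in> ?S \<and> \<not> ?gen D} = (Q * Q - Q) div 2"
    using cNG by simp
  have QQ': "q ^ (4*m - 2) - q ^ (2*m - 1) = Q * Q - Q" using QQ Q_def by simp
  have c1: "card {D\<in>?S. ?gen D} = q ^ (2*m - 1) + 1" using cG by (simp only: Q_def)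
  have c2: "card {D\<in>?S. \<not> ?gen D} = q ^ (4*m - 2) - q ^ (2*m - 1)" using cNG by (simp only: QQ')
  have c3: "\<forall>D\<in>?S. \<not> ?gen D \<longrightarrow> HT.pol D \<in> ?S \<and> D \<inter> HT.pol D = {0}" using NP by blast
  have c4: "card {{D, HT.pol D} | D. D \<in> ?S \<and> \<not> ?gen D} = (q ^ (4*m - 2) - q ^ (2*m - 1)) div 2"
    using cP by (simp only: QQ')
  show ?thesis by (rule exI[of _ ?S]) (intro conjI spread c1 c2 c3 c4)
qed


end
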